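(* Let $w\ge1$ and suppose $\alpha_2^2\le\frac{\ln w}{4}$ and $\alpha_1\sqrt w\ge \ln w$. If at a time $t\in[0,T)$ with $a_t^2\le\frac12$ the solution of the guided probability flow ODE satisfies $$x(t)\le \min\Bigl(\frac{\ln w}{16\alpha_2},\ \frac{\alpha_1\sqrt w}{2\beta}\Bigr),$$ then $$x'(t)\ge\frac{a_t\alpha_1\sqrt w}{2\beta b_t^2}.$$
   Context: Let $0<\alpha_1<\alpha_2$ and $\beta\ge1$. Let $p^{(1)}$ and $p^{(-1)}$ be probability densities on $\mathbb R$ supported on $[\alpha_1,\alpha_2]$ and $[-\alpha_2,-\alpha_1]$ respectively, which are $\beta$-bounded with respect to each other: $\frac1\beta\le \frac{p^{(-1)}(x_1)}{p^{(1)}(x_2)}\le\beta$ for all $x_1\in(-\alpha_2,-\alpha_1)$, $x_2\in(\alpha_1,\alpha_2)$. Let $p=\frac12p^{(1)}+\frac12p^{(-1)}$, and let $(X_0,z)$ be jointly distributed with $z$ uniform on $\{\pm1\}$ and $X_0\mid z\sim p^{(z)}$. Fix $T>0$; for $t\in[0,T]$ put $a_t=e^{t-T}$, $b_t=\sqrt{1-a_t^2}$, and $X_t=a_tX_0+\xi_t$ with $\xi_t\sim\mathcal N(0,b_t^2)$ independent of $(X_0,z)$. Let $p_t$ denote the density of $X_t$ and $p_t(\cdot\mid z=\pm1)$ the conditional density of $X_t$ given $z=\pm1$. For a guidance parameter $w\ge0$, the guided probability flow ODE is $x'(t)=x(t)+(w+1)\nabla\log p_t(x(t)\mid z=1)-w\nabla\log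 p_t(x(t))$, $t\in[0,T)$. *)

theory Defs
  imports "HOL-Probability.Probability"
begin

definition sched_a :: "real \<Rightarrow> real \<Rightarrow> real" where
  "sched_a T t = exp (t - T)"

definition sched_b :: "real \<Rightarrow> real \<Rightarrow> real" where
  "sched_b T t = sqrt (1 - (sched_a T t)\<^sup>2)"

definition is_density :: "(real \<Rightarrow> real) \<Rightarrow> bool" where
  "is_density p \<longleftrightarrow> p \<in> borel_measurable lborel \<and> (\<forall>x. 0 \<le> p x)
     \<and> integrable lborel p \<and> (LINT x|lborel. p x) = 1"

text \<open>Density of X_t = a X_0 + xi, xi ~ N(0,b^2) independent, X_0 ~ q.\<close>
definition noised_density :: "(real \<Rightarrow> real) \<Rightarrow> real \<Rightarrow> real \<Rightarrow> real \<Rightarrow> real" where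
  "noised_density q a b x = (LINT y|lborel. q y * normal_density (a * y) b x)"

text \<open>Conditional density p_t(x | z = 1) (given q = p^(1)).\<close>
definition cond_density_t :: "(real \<Rightarrow> real) \<Rightarrow> real \<Rightarrow> real \<Rightarrow> real \<Rightarrow> real" where
  "cond_density_t q T t x = noised_density q (sched_a T t) (sched_b T t) x"

definition marg_density_t :: "(real \<Rightarrow> real) \<Rightarrow> (real \<Rightarrow> real) \<Rightarrow> real \<Rightarrow> real \<Rightarrow> real \<Rightarrow> real" where
  "marg_density_t p1 pm1 T t x = 1/2 * cond_density_t p1 T t x + 1/2 * cond_density_t pm1 T t x"

definition score :: "(real \<Rightarrow> real) \<Rightarrow> real \<Rightarrow> real" where
  "score f x = deriv (\<lambda>u. ln (f u)) x"

definition guided_field :: "(real \<Rightarrow> real) \<Rightarrow> (real \<Rightarrow> real) \<Rightarrow> real \<Rightarrow> real \<Rightarrow> real \<Rightarrow> real \<Rightarrow> real" where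
  "guided_field p1 pm1 T w t x =
     x + (w + 1) * score (cond_density_t p1 T t) x - w * score (marg_density_t p1 pm1 T t) x"

end

theory Submission
  imports Defs
begin


definition G :: "real \<Rightarrow> real \<Rightarrow> real" where
  "G b s = exp (- s\<^sup>2 / (2 * b\<^sup>2))"

definition G1 :: "real \<Rightarrow> real \<Rightarrow> real" where
  "G1 b s = - (s / b\<^sup>2) * G b s"

definition G2 :: "real \<Rightarrow> real \<Rightarrow> real" where
  "G2 b s = (s\<^sup>2 / b^4 - 1 / b\<^sup>2) * G b s"

lemma G_pos: "0 < G b s" by (simp add: G_def)

lemma G_le1: "G b s \<le> 1"
  unfolding G_def by simp

lemma G_deriv: assumes "b > 0" shows "((G b) has_real_derivative G1 b s) (at s)"
  unfolding G_def G1_def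
  using assms by (auto intro!: derivative_eq_intros simp: field_simps power2_eq_square)

lemma G1_deriv: assumes "b > 0" shows "((G1 b) has_real_derivative G2 b s) (at s)"
proof -
  have d1: "((\<lambda>s. -(s/b\<^sup>2)) has_real_derivative -(1/b\<^sup>2)) (at s)"
    using DERIV_minus[OF DERIV_cdivide[OF DERIV_ident, of "b\<^sup>2"]] by simp
  have d: "((\<lambda>s. -(s/b\<^sup>2) * G b s) has_real_derivative (-(1/b\<^sup>2) * G b s + G1 b s * -(s/b\<^sup>2))) (at s)"
    by (rule DERIV_mult[OF d1 G_deriv[OF assms]])
  have e: "-(1/b\<^sup>2) * G b s + G1 b s * -(s/b\<^sup>2) = G2 b s"
  proof -
    have bnz: "b \<noteq> 0" using assms by simp
    have "b^4 = b\<^sup>2 * b\<^sup>2" by algebra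
    thus ?thesis unfolding G1_def G2_def using bnz by (simp add: field_simps power2_eq_square)
  qed
  have f: "G1 b = (\<lambda>s. -(s/b\<^sup>2) * G b s)" unfolding G1_def by auto
  have d2: "((\<lambda>s. -(s/b\<^sup>2) * G b s) has_real_derivative G2 b s) (at s)"
    using d by (simp only: e)
  show ?thesis unfolding f by (rule d2)
qed

lemma vexp: assumes "0 \<le> (v::real)" shows "(1 + v) * exp (- v) \<le> 1"
proof -
  have "1 + v \<le> exp v" by (rule exp_ge_add_one_self)
  hence "(1 + v) * exp (-v) \<le> exp v * exp (-v)" by (intro mult_right_mono) auto
  thus ?thesis by (simp add: exp_minus)
qed

lemma G_eq: shows "G b s = exp (- (s\<^sup>2 / (2*b\<^sup>2)))"
  unfolding G_def by simp

lemma vexp2: assumes "0 \<le> (v::real)" shows "v * exp (- v) \<le> 1"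
proof -
  have "v * exp (-v) \<le> (1 + v) * exp (-v)" by (intro mult_right_mono) auto
  thus ?thesis using vexp[OF assms] by linarith
qed

lemma G2_bound: assumes "b > 0" shows "\<bar>G2 b s\<bar> \<le> 3 / b\<^sup>2"
proof -
  define v where "v = s\<^sup>2 / (2*b\<^sup>2)"
  have v0: "0 \<le> v" unfolding v_def by simp
  have Gv: "G b s = exp (-v)" unfolding v_def G_eq ..
  have A: "0 \<le> s\<^sup>2 / b^4" by simp
  have B: "0 \<le> 1 / b\<^sup>2" by simp
  have "\<bar>s\<^sup>2 / b^4 - 1 / b\<^sup>2\<bar> \<le> s\<^sup>2 / b^4 + 1 / b\<^sup>2" using A B by linarith
  hence "\<bar>G2 b s\<bar> \<le> (s\<^sup>2 / b^4 + 1 / b\<^sup>2) * G b s"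
    unfolding G2_def abs_mult abs_of_pos[OF G_pos] using G_pos[of b s] by (intro mult_right_mono) auto
  also have "\<dots> = (s\<^sup>2 / b^4) * G b s + (1/b\<^sup>2) * G b s" by (simp add: algebra_simps)
  also have "(s\<^sup>2 / b^4) * G b s = 2 / b\<^sup>2 * (v * exp (-v))"
  proof -
    have "b^4 = b\<^sup>2 * b\<^sup>2" by algebra
    thus ?thesis using assms unfolding v_def Gv by (simp add: field_simps)
  qed
  also have "\<dots> \<le> 2 / b\<^sup>2 * 1" using vexp2[OF v0] by (intro mult_left_mono) auto
  also have "(1/b\<^sup>2) * G b s \<le> 1/b\<^sup>2 * 1" using G_le1[of b s] by (intro mult_left_mono) auto
  finally show ?thesis by (simp add: add_divide_distrib[symmetric])
qed

lemma G1_bound: assumes "b > 0" shows "\<bar>G1 b s\<bar> \<le> 1 / b"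
proof -
  define v where "v = s\<^sup>2 / (2*b\<^sup>2)"
  have v0: "0 \<le> v" unfolding v_def by simp
  have Gv: "G b s = exp (-v)" unfolding v_def G_eq ..
  have "0 \<le> (\<bar>s\<bar> - b)\<^sup>2" by simp
  hence "2 * \<bar>s\<bar> * b \<le> s\<^sup>2 + b\<^sup>2"
    by (simp add: power2_eq_square algebra_simps)
  moreover have "2*b\<^sup>2*(1+v) = 2*b\<^sup>2 + s\<^sup>2" unfolding v_def using assms by (simp add: field_simps)
  moreover have "0 \<le> b\<^sup>2" by simp
  moreover have "\<bar>s\<bar> * (2 * b) = 2 * \<bar>s\<bar> * b" by simp
  ultimately have "\<bar>s\<bar> * (2 * b) \<le> (2*b\<^sup>2) * (1 + v)" by linarith
  hence "\<bar>s\<bar> * (2 * b) \<le> (2*b) * (b * (1 + v))" by (simp add: power2_eq_square algebra_simps)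
  hence s1: "\<bar>s\<bar> \<le> b * (1 + v)" using assms by (simp add: mult.commute)
  have "\<bar>G1 b s\<bar> = \<bar>s\<bar> * G b s / b\<^sup>2"
    unfolding G1_def using G_pos[of b s] by (simp add: abs_mult)
  also have "\<bar>s\<bar> * G b s \<le> b * ((1 + v) * exp (-v))" unfolding Gv using s1
    by (simp add: mult.assoc[symmetric] mult_right_mono)
  also have "\<dots> \<le> b * 1" using vexp[OF v0] assms by (intro mult_left_mono) auto
  finally show ?thesis using assms by (simp add: divide_right_mono power2_eq_square)
qed

lemma G_quad: assumes "b > 0" shows "\<bar>G b (s+h) - G b s - h * G1 b s\<bar> \<le> 3 / b\<^sup>2 * h\<^sup>2"
proof (cases "h = 0")
  case True thus ?thesis by simp
next
  case False
  define diff :: "nat \<Rightarrow> real \<Rightarrow> real" where "diff = (\<lambda>m. if m = 0 then G b else if m = 1 then G1 b else G2 b)"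
  have D: "\<forall>m t. m < 2 \<and> min s (s+h) \<le> t \<and> t \<le> max s (s+h) \<longrightarrow> DERIV (diff m) t :> diff (Suc m) t"
  proof (intro allI impI)
    fix m :: nat and t :: real assume "m < 2 \<and> min s (s+h) \<le> t \<and> t \<le> max s (s+h)"
    hence "m = 0 \<or> m = 1" by auto
    thus "DERIV (diff m) t :> diff (Suc m) t"
      using G_deriv[OF assms] G1_deriv[OF assms] unfolding diff_def by auto
  qed
  obtain t where t: "G b (s+h) = (\<Sum>m<2. (diff m s / fact m) * ((s+h) - s)^m) + (diff 2 t / fact 2) * ((s+h) - s)^2"
    using Taylor[where n=2 and diff=diff and f="G b" and a="min s (s+h)" and b="max s (s+h)" and c=s and x="s+h", OF _ _ D]
    False unfolding diff_def by auto
  have "(\<Sum>m<2. (diff m s / fact m) * ((s+h) - s)^m) = G b s + G1 b s * h"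
    by (simp add: diff_def numeral_2_eq_2)
  hence e: "G b (s+h) - G b s - h * G1 b s = G2 b t / 2 * h\<^sup>2" using t unfolding diff_def by simp
  have "\<bar>G2 b t / 2 * h\<^sup>2\<bar> = \<bar>G2 b t\<bar> / 2 * h\<^sup>2" by (simp add: abs_mult)
  also have "\<dots> \<le> 3 / b\<^sup>2 / 2 * h\<^sup>2" using G2_bound[OF assms, of t]
    by (intro mult_right_mono divide_right_mono) auto
  also have "\<dots> \<le> 3 / b\<^sup>2 * h\<^sup>2"
  proof -
    have hz: "\<And>z::real. 0 \<le> z \<Longrightarrow> z / 2 \<le> z" by linarith
    have "3 / b\<^sup>2 / 2 \<le> 3 / b\<^sup>2" by (rule hz) simp
    thus ?thesis by (intro mult_right_mono) auto
  qed
  finally show ?thesis unfolding e .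
qed

lemma deriv_quad:
  fixes f :: "real \<Rightarrow> real"
  assumes "\<And>h. \<bar>f (x+h) - f x - h*D\<bar> \<le> C * h\<^sup>2"
  shows "(f has_real_derivative D) (at x)"
proof -
  have "((\<lambda>h. (f (x+h) - f x)/h - D) \<longlongrightarrow> 0) (at 0)"
  proof (rule Lim_null_comparison[where g="\<lambda>h. \<bar>C\<bar> * \<bar>h\<bar>"])
    show "\<forall>\<^sub>F h in at 0. norm ((f (x+h) - f x)/h - D) \<le> \<bar>C\<bar> * \<bar>h\<bar>"
      unfolding eventually_at_filter
    proof (intro always_eventually allI impI)
      fix h :: real assume "h \<noteq> 0"
      have "(f (x+h) - f x)/h - D = (f (x+h) - f x - h*D) / h" using \<open>h \<noteq> 0\<close> by (simp add: field_simps)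
      hence "norm ((f (x+h) - f x)/h - D) = \<bar>f (x+h) - f x - h*D\<bar> / \<bar>h\<bar>" by simp
      also have "\<dots> \<le> C * h\<^sup>2 / \<bar>h\<bar>" using assms by (intro divide_right_mono) auto
      also have "C * h\<^sup>2 / \<bar>h\<bar> = C * \<bar>h\<bar>" 
      proof -
        have eq: "h\<^sup>2 = \<bar>h\<bar> * \<bar>h\<bar>" by (simp add: power2_eq_square)
        show ?thesis using \<open>h \<noteq> 0\<close> by (subst eq, simp del: abs_mult_self_eq)
      qed
      also have "\<dots> \<le> \<bar>C\<bar> * \<bar>h\<bar>" by (intro mult_right_mono) auto
      finally show "norm ((f (x+h) - f x)/h - D) \<le> \<bar>C\<bar> * \<bar>h\<bar>" .
    qed
    show "((\<lambda>h. \<bar>C\<bar> * \<bar>h\<bar>) \<longlongrightarrow> 0) (at 0)"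
      by (auto intro!: tendsto_eq_intros)
  qed
  hence "((\<lambda>h. (f (x+h) - f x)/h - D + D) \<longlongrightarrow> 0 + D) (at 0)" by (intro tendsto_add) auto
  thus ?thesis unfolding DERIV_def by simp
qed

lemma integrable_bdd:
  fixes p g :: "real \<Rightarrow> real"
  assumes p: "integrable lborel p" and gm: "g \<in> borel_measurable lborel"
    and gb: "\<And>y. \<bar>g y\<bar> \<le> B"
  shows "integrable lborel (\<lambda>y. p y * g y)"
proof (rule Bochner_Integration.integrable_bound[where f="\<lambda>y. B * p y"])
  show "integrable lborel (\<lambda>y. B * p y)" using p by simp
  have "p \<in> borel_measurable lborel" using p by simp
  thus "(\<lambda>y. p y * g y) \<in> borel_measurable lborel" using gm by measurable
  show "AE y in lborel. norm (p y * g y) \<le> norm (B * p y)"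
  proof (intro AE_I2)
    fix y
    have "0 \<le> B" using gb[of y] by linarith
    have "\<bar>p y * g y\<bar> = \<bar>p y\<bar> * \<bar>g y\<bar>" by (simp add: abs_mult)
    also have "\<dots> \<le> \<bar>p y\<bar> * B" using gb[of y] by (intro mult_left_mono) auto
    also have "\<dots> = \<bar>B * p y\<bar>" using \<open>0 \<le> B\<close> by (simp add: abs_mult)
    finally show "norm (p y * g y) \<le> norm (B * p y)" by simp
  qed
qed

lemma int_deriv:
  fixes p g' :: "real \<Rightarrow> real" and g :: "real \<Rightarrow> real \<Rightarrow> real"
  assumes p: "integrable lborel p"
  and gm: "\<And>u. (\<lambda>y. g u y) \<in> borel_measurable lborel"
  and g'm: "g' \<in> borel_measurable lborel"
  and gb: "\<And>u y. \<bar>g u y\<bar> \<le> B" and g'b: "\<And>y. \<bar>g' y\<bar> \<le> B"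
  and quad: "\<And>h y. \<bar>g (x+h) y - g x y - h * g' y\<bar> \<le> M * h\<^sup>2"
  shows "((\<lambda>u. LINT y|lborel. p y * g u y) has_real_derivative (LINT y|lborel. p y * g' y)) (at x)"
proof (rule deriv_quad[where C="M * (LINT y|lborel. \<bar>p y\<bar>)"])
  fix h :: real
  have i1: "\<And>u. integrable lborel (\<lambda>y. p y * g u y)"
    by (rule integrable_bdd[OF p gm gb])
  have i2: "integrable lborel (\<lambda>y. p y * g' y)"
    by (rule integrable_bdd[OF p g'm g'b])
  have i3: "integrable lborel (\<lambda>y. h * (p y * g' y))" using i2 by simp
  have ip: "integrable lborel (\<lambda>y. \<bar>p y\<bar> * (M * h\<^sup>2))" using p by simp
  have "(LINT y|lborel. p y * g (x+h) y) - (LINT y|lborel. p y * g x y) - h * (LINT y|lborel. p y * g' y)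
      = (LINT y|lborel. p y * g (x+h) y - p y * g x y - h * (p y * g' y))"
    using i1 i2 i3 by simp
  also have "\<dots> = (LINT y|lborel. p y * (g (x+h) y - g x y - h * g' y))"
    by (simp add: algebra_simps)
  finally have e: "(LINT y|lborel. p y * g (x+h) y) - (LINT y|lborel. p y * g x y) - h * (LINT y|lborel. p y * g' y)
      = (LINT y|lborel. p y * (g (x+h) y - g x y - h * g' y))" .
  have i4: "integrable lborel (\<lambda>y. p y * (g (x+h) y - g x y - h * g' y))"
  proof -
    have "integrable lborel (\<lambda>y. p y * g (x+h) y - p y * g x y - h * (p y * g' y))"
      using i1 i2 i3 by simp
    thus ?thesis by (simp add: algebra_simps)
  qed
  have "\<bar>LINT y|lborel. p y * (g (x+h) y - g x y - h * g' y)\<bar>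
      \<le> (LINT y|lborel. norm (p y * (g (x+h) y - g x y - h * g' y)))"
    using integral_norm_bound[of lborel "\<lambda>y. p y * (g (x+h) y - g x y - h * g' y)"] by simp
  also have "\<dots> \<le> (LINT y|lborel. \<bar>p y\<bar> * (M * h\<^sup>2))"
  proof (rule integral_mono)
    show "integrable lborel (\<lambda>y. norm (p y * (g (x+h) y - g x y - h * g' y)))"
      using i4 by simp
    show "integrable lborel (\<lambda>y. \<bar>p y\<bar> * (M * h\<^sup>2))" by (rule ip)
    fix y
    show "norm (p y * (g (x+h) y - g x y - h * g' y)) \<le> \<bar>p y\<bar> * (M * h\<^sup>2)"
      using quad[of h y] by (simp add: abs_mult mult_left_mono)
  qed
  also have "\<dots> = M * (LINT y|lborel. \<bar>p y\<bar>) * h\<^sup>2"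
    by (simp add: mult.commute mult.left_commute)
  finally show "\<bar>(LINT y|lborel. p y * g (x+h) y) - (LINT y|lborel. p y * g x y) - h * (LINT y|lborel. p y * g' y)\<bar>
      \<le> M * (LINT y|lborel. \<bar>p y\<bar>) * h\<^sup>2" unfolding e .
qed

definition cK :: "real \<Rightarrow> real" where "cK b = 1 / sqrt (2 * pi * b\<^sup>2)"

lemma cK_pos: "b > 0 \<Longrightarrow> cK b > 0" unfolding cK_def by simp

lemma ND: "normal_density (a*y) b u = cK b * G b (u - a*y)"
  by (simp add: normal_density_def G_def cK_def)

lemma G_meas: "(\<lambda>y. G b (u - a*y)) \<in> borel_measurable lborel"
  unfolding G_def by measurable

lemma G1_meas: "(\<lambda>y. G1 b (u - a*y)) \<in> borel_measurable lborel"
  unfolding G1_def G_def by measurable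

lemma noised_deriv:
  assumes b: "b > 0" and p: "integrable lborel p"
  shows "(noised_density p a b has_real_derivative (LINT y|lborel. p y * (cK b * G1 b (x - a*y)))) (at x)"
proof -
  have c: "cK b > 0" using cK_pos[OF b] .
  have "((\<lambda>u. LINT y|lborel. p y * (cK b * G b (u - a*y))) has_real_derivative (LINT y|lborel. p y * (cK b * G1 b (x - a*y)))) (at x)"
  proof (rule int_deriv[where B="cK b + cK b / b" and M="cK b * (3/b\<^sup>2)", OF p])
    show "(\<lambda>y. cK b * G b (u - a*y)) \<in> borel_measurable lborel" for u using G_meas by simp
    show "(\<lambda>y. cK b * G1 b (x - a*y)) \<in> borel_measurable lborel" using G1_meas by simp
    show "\<bar>cK b * G b (u - a*y)\<bar> \<le> cK b + cK b / b" for u y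
    proof -
      have "\<bar>cK b * G b (u - a*y)\<bar> = cK b * G b (u - a*y)" using c G_pos[of b "u - a*y"] by (simp add: abs_mult)
      also have "\<dots> \<le> cK b * 1" using c G_le1[of b] by (intro mult_left_mono) auto
      also have "\<dots> \<le> cK b + cK b / b" using c b by simp
      finally show ?thesis .
    qed
    show "\<bar>cK b * G1 b (x - a*y)\<bar> \<le> cK b + cK b / b" for y
    proof -
      have "\<bar>cK b * G1 b (x - a*y)\<bar> = cK b * \<bar>G1 b (x - a*y)\<bar>" using c by (simp add: abs_mult)
      also have "\<dots> \<le> cK b * (1/b)" using c G1_bound[OF b] by (intro mult_left_mono) auto
      also have "\<dots> \<le> cK b + cK b / b" using c b by simp
      finally show ?thesis .
    qed
    show "\<bar>cK b * G b (x + h - a*y) - cK b * G b (x - a*y) - h * (cK b * G1 b (x - a*y))\<bar> \<le> cK b * (3/b\<^sup>2) * h\<^sup>2" for h y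
    proof -
      have e: "x + h - a*y = (x - a*y) + h" by simp
      have "\<bar>cK b * G b (x + h - a*y) - cK b * G b (x - a*y) - h * (cK b * G1 b (x - a*y))\<bar>
         = cK b * \<bar>G b ((x - a*y) + h) - G b (x - a*y) - h * G1 b (x - a*y)\<bar>"
      proof -
        have e2: "cK b * G b (x + h - a*y) - cK b * G b (x - a*y) - h * (cK b * G1 b (x - a*y))
           = cK b * (G b ((x - a*y) + h) - G b (x - a*y) - h * G1 b (x - a*y))"
          unfolding e by (simp add: algebra_simps)
        show ?thesis by (simp only: e2 abs_mult abs_of_pos[OF c])
      qed
      also have "\<dots> \<le> cK b * (3 / b\<^sup>2 * h\<^sup>2)" using c G_quad[OF b] by (intro mult_left_mono) auto
      finally show ?thesis by simp
    qed
  qed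
  thus ?thesis unfolding noised_density_def ND .
qed

lemma int_mono_supp:
  fixes p f1 f2 :: "real \<Rightarrow> real"
  assumes p: "is_density p"
    and m1: "f1 \<in> borel_measurable lborel" and m2: "f2 \<in> borel_measurable lborel"
    and b1: "\<And>y. \<bar>f1 y\<bar> \<le> B" and b2: "\<And>y. \<bar>f2 y\<bar> \<le> B"
    and le: "\<And>y. p y \<noteq> 0 \<Longrightarrow> f1 y \<le> f2 y"
  shows "(LINT y|lborel. p y * f1 y) \<le> (LINT y|lborel. p y * f2 y)"
proof (rule integral_mono)
  have pi: "integrable lborel p" using p unfolding is_density_def by simp
  show "integrable lborel (\<lambda>y. p y * f1 y)" by (rule integrable_bdd[OF pi m1 b1])
  show "integrable lborel (\<lambda>y. p y * f2 y)" by (rule integrable_bdd[OF pi m2 b2])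
  fix y
  show "p y * f1 y \<le> p y * f2 y"
  proof (cases "p y = 0")
    case True thus ?thesis by simp
  next
    case False
    thus ?thesis using le[OF False] p unfolding is_density_def by (intro mult_left_mono) auto
  qed
qed

lemma int_const: assumes "is_density p" shows "(LINT y|lborel. p y * L) = L"
  using assms unfolding is_density_def by simp

lemma G_mono: assumes "s2\<^sup>2 \<le> s1\<^sup>2" shows "G b s1 \<le> G b s2"
  unfolding G_def using assms by (simp add: divide_right_mono)

lemma G_ratio: assumes "b > 0" "s2\<^sup>2 - s1\<^sup>2 \<le> 2 * b\<^sup>2 * L" shows "G b s1 \<le> exp L * G b s2"
proof -
  have "s2\<^sup>2 / (2*b\<^sup>2) - s1\<^sup>2 / (2*b\<^sup>2) \<le> L"
    using assms by (simp add: diff_divide_distrib[symmetric] pos_divide_le_eq mult.commute)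
  hence "- s1\<^sup>2 / (2 * b\<^sup>2) \<le> L + - s2\<^sup>2 / (2 * b\<^sup>2)" by simp
  hence "exp (- s1\<^sup>2 / (2 * b\<^sup>2)) \<le> exp (L + - s2\<^sup>2 / (2 * b\<^sup>2))" by simp
  thus ?thesis unfolding G_def exp_add .
qed



lemma final_alg:
  fixes D1 Dm E1 Em X a b2 sw \<alpha>1 \<beta> :: real
  assumes D1: "D1 > 0" and Dm: "Dm > 0" and R: "D1 \<le> sw * Dm" and s1: "sw \<ge> 1"
   and b2: "b2 > 0" and b2e: "b2 = 1 - a\<^sup>2" and a: "0 < a" "a \<le> 1" and al: "\<alpha>1 > 0" and be: "\<beta> \<ge> 1"
   and E1: "E1 \<ge> (a*\<alpha>1 - X)/b2 * D1" and Em: "Em \<le> (-a*\<alpha>1 - X)/b2 * Dm"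
   and X: "X \<le> \<alpha>1 * sw / (2*\<beta>)"
  shows "X + (sw\<^sup>2+1) * (E1/D1) - sw\<^sup>2 * ((1/2*E1 + 1/2*Em)/(1/2*D1 + 1/2*Dm)) \<ge> a*\<alpha>1* sw/(2*\<beta>*b2)"
proof -
  define e1 where "e1 = E1/D1"
  define e2 where "e2 = Em/Dm"
  have he1: "e1 \<ge> (a*\<alpha>1 - X)/b2" unfolding e1_def using E1 D1 by (simp add: pos_le_divide_eq)
  have he2: "e2 \<le> (-a*\<alpha>1 - X)/b2" unfolding e2_def using Em Dm by (simp add: pos_divide_le_eq)
  have E1e: "E1 = e1 * D1" unfolding e1_def using D1 by simp
  have Eme: "Em = e2 * Dm" unfolding e2_def using Dm by simp
  have q: "(1/2*E1 + 1/2*Em)/(1/2*D1 + 1/2*Dm) = e1 - Dm * (e1 - e2) / (D1 + Dm)"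
    unfolding E1e Eme using D1 Dm by (simp add: field_simps)
  have dd: "e1 - e2 \<ge> 2*a*\<alpha>1/b2"
  proof -
    have "(a*\<alpha>1 - X)/b2 - (-a*\<alpha>1 - X)/b2 = 2*a*\<alpha>1/b2" using b2 by (simp add: field_simps)
    thus ?thesis using he1 he2 by linarith
  qed
  have dd0: "0 \<le> 2*a*\<alpha>1/b2" using a al b2 by simp
  have rho: "Dm / (D1 + Dm) \<ge> 1 / (sw + 1)"
  proof -
    have "D1 + Dm \<le> (sw+1) * Dm" using R by (simp add: algebra_simps)
    thus ?thesis using D1 Dm s1 by (simp add: field_simps)
  qed
  have "sw\<^sup>2 * (Dm * (e1 - e2) / (D1 + Dm)) = sw\<^sup>2 * (Dm / (D1 + Dm)) * (e1 - e2)" by simp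
  also have "\<dots> \<ge> sw\<^sup>2 * (1 / (sw + 1)) * (2*a*\<alpha>1/b2)"
    using rho dd dd0 s1 D1 Dm by (intro mult_mono mult_left_mono) auto
  finally have T1: "sw\<^sup>2 * (Dm * (e1 - e2) / (D1 + Dm)) \<ge> sw\<^sup>2 / (sw + 1) * (2*a*\<alpha>1/b2)" by simp
  have "sw\<^sup>2 / (sw+1) * 2 \<ge> sw"
  proof -
    have "sw * (sw+1) \<le> sw\<^sup>2 * 2" using s1 by (simp add: power2_eq_square algebra_simps)
    thus ?thesis using s1 by (simp add: field_simps)
  qed
  hence "sw\<^sup>2 / (sw + 1) * (2*a*\<alpha>1/b2) \<ge> sw * (a*\<alpha>1/b2)"
  proof -
    have k0: "0 \<le> a*\<alpha>1/b2" using a al b2 by simp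
    have "sw * (a*\<alpha>1/b2) \<le> (sw\<^sup>2/(sw+1)*2) * (a*\<alpha>1/b2)" by (rule mult_right_mono[OF \<open>_ \<ge> sw\<close> k0])
    also have "\<dots> = sw\<^sup>2 / (sw + 1) * (2*a*\<alpha>1/b2)" by simp
    finally show ?thesis .
  qed
  with T1 have T2: "sw\<^sup>2 * (Dm * (e1 - e2) / (D1 + Dm)) \<ge> sw * (a*\<alpha>1/b2)" by linarith
  have LHS: "X + (sw\<^sup>2+1) * (E1/D1) - sw\<^sup>2 * ((1/2*E1 + 1/2*Em)/(1/2*D1 + 1/2*Dm))
      = X + e1 + sw\<^sup>2 * (Dm * (e1 - e2) / (D1 + Dm))"
    unfolding q e1_def[symmetric] by (simp add: algebra_simps)
  have "X + e1 + sw\<^sup>2 * (Dm * (e1 - e2) / (D1 + Dm)) \<ge> X + (a*\<alpha>1 - X)/b2 + sw * (a*\<alpha>1/b2)"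
    using he1 T2 by linarith
  also have "X + (a*\<alpha>1 - X)/b2 + sw * (a*\<alpha>1/b2) = (- a\<^sup>2 * X + a*\<alpha>1 + sw*a*\<alpha>1)/b2"
    using b2 b2e by (simp add: field_simps) (metis distrib_left mult.right_neutral)
  also have "(- a\<^sup>2 * X + a*\<alpha>1 + sw*a*\<alpha>1)/b2 \<ge> a*\<alpha>1* sw/(2*\<beta>*b2)"
  proof -
    have sa: "0 \<le> sw*a*\<alpha>1" using s1 a al by simp
    have k: "a*\<alpha>1* sw/(2*\<beta>) \<le> sw*a*\<alpha>1/2"
    proof -
      have "a*\<alpha>1* sw/(2*\<beta>) = (sw*a*\<alpha>1/2) / \<beta>" by (simp add: field_simps)
      also have "\<dots> \<le> sw*a*\<alpha>1/2"
      proof -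
        have z0: "0 \<le> sw*a*\<alpha>1/2" using sa by simp
        have "sw*a*\<alpha>1/2 * 1 \<le> sw*a*\<alpha>1/2 * \<beta>" by (rule mult_left_mono[OF be z0])
        thus ?thesis using be by (simp add: pos_divide_le_eq)
      qed
      finally show ?thesis .
    qed
    have xa: "a\<^sup>2 * X \<le> a*\<alpha>1* sw/(2*\<beta>)"
    proof (cases "X \<le> 0")
      case True
      hence "a\<^sup>2 * X \<le> 0" by (simp add: mult_nonneg_nonpos)
      moreover have "0 \<le> a*\<alpha>1* sw/(2*\<beta>)" using a al s1 be by simp
      ultimately show ?thesis by linarith
    next
      case False
      have "a\<^sup>2 * X = a * (a * X)" by (simp add: power2_eq_square)
      also have "a * X \<le> X" using a False by (simp add: mult_le_cancel_right1)
      hence "a * (a * X) \<le> a * X" using a by (intro mult_left_mono) auto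
      also have "a * X \<le> a * (\<alpha>1 * sw / (2*\<beta>))" using X a by (intro mult_left_mono) auto
      finally show ?thesis by simp
    qed
    have "a*\<alpha>1* sw/(2*\<beta>) \<le> - a\<^sup>2 * X + a*\<alpha>1 + sw*a*\<alpha>1"
    proof -
      have "0 < a*\<alpha>1" using a al by simp
      thus ?thesis using xa k by linarith
    qed
    hence "a*\<alpha>1* sw/(2*\<beta>) / b2 \<le> (- a\<^sup>2 * X + a*\<alpha>1 + sw*a*\<alpha>1) / b2"
      using b2 by (intro divide_right_mono) auto
    thus ?thesis by simp
  qed
  finally show ?thesis unfolding LHS .
qed



lemma clamp_sq:
  fixes a X y \<alpha>1 \<alpha>2 :: real
  assumes a: "a > 0" and y: "\<alpha>1 \<le> y" "y \<le> \<alpha>2"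
  shows "(X - a * max \<alpha>1 (min \<alpha>2 (X/a)))\<^sup>2 \<le> (X - a*y)\<^sup>2"
proof (cases "X/a \<le> \<alpha>1")
  case True
  hence m: "max \<alpha>1 (min \<alpha>2 (X/a)) = \<alpha>1" by auto
  have "X \<le> a*\<alpha>1" using True a by (simp add: divide_le_eq mult.commute)
  moreover have "a*\<alpha>1 \<le> a*y" using a y by simp
  ultimately have "0 \<le> a*\<alpha>1 - X" "a*\<alpha>1 - X \<le> a*y - X" by auto
  hence "(a*\<alpha>1 - X)\<^sup>2 \<le> (a*y - X)\<^sup>2" by (intro power_mono) auto
  thus ?thesis unfolding m by (simp add: power2_commute)
next
  case False
  show ?thesis
  proof (cases "X/a \<ge> \<alpha>2")
    case True
    hence m: "max \<alpha>1 (min \<alpha>2 (X/a)) = \<alpha>2" using y False by auto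
    have "X \<ge> a*\<alpha>2" using True a by (simp add: le_divide_eq mult.commute)
    moreover have "a*y \<le> a*\<alpha>2" using a y by simp
    ultimately have "0 \<le> X - a*\<alpha>2" "X - a*\<alpha>2 \<le> X - a*y" by auto
    hence "(X - a*\<alpha>2)\<^sup>2 \<le> (X - a*y)\<^sup>2" by (intro power_mono) auto
    thus ?thesis unfolding m .
  next
    case False2: False
    hence m: "max \<alpha>1 (min \<alpha>2 (X/a)) = X/a" using False by auto
    show ?thesis unfolding m using a by simp
  qed
qed

lemma clamp_in:
  fixes \<alpha>1 \<alpha>2 z :: real
  assumes "\<alpha>1 < \<alpha>2"
  shows "\<alpha>1 \<le> max \<alpha>1 (min \<alpha>2 z)" "max \<alpha>1 (min \<alpha>2 z) \<le> \<alpha>2"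
  using assms by auto

lemma ratio_diff:
  fixes a b X y ys \<alpha>1 \<alpha>2 L :: real
  assumes a: "a > 0" "a \<le> 1" "a\<^sup>2 \<le> 1/2" and b: "b\<^sup>2 \<ge> 1/2"
    and al: "0 < \<alpha>1" "\<alpha>1 < \<alpha>2" and ys: "\<alpha>1 \<le> ys" "ys \<le> \<alpha>2"
    and y: "-\<alpha>2 \<le> y" "y \<le> -\<alpha>1" and L: "\<alpha>2\<^sup>2 \<le> L/4" "X \<le> L/(16*\<alpha>2)" "L \<ge> 0"
  shows "(X - a*y)\<^sup>2 - (X - a*ys)\<^sup>2 \<le> 2*b\<^sup>2*(L/2)"
proof -
  have e: "(X - a*y)\<^sup>2 - (X - a*ys)\<^sup>2 = 2*(a*X)*(ys - y) + a\<^sup>2*(y\<^sup>2 - ys\<^sup>2)"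
    by (simp add: power2_eq_square algebra_simps)
  have y2: "y\<^sup>2 \<le> \<alpha>2\<^sup>2"
  proof -
    have "\<bar>y\<bar> \<le> \<bar>\<alpha>2\<bar>" using y al by auto
    thus ?thesis by (simp add: abs_le_square_iff)
  qed
  have t2: "a\<^sup>2*(y\<^sup>2 - ys\<^sup>2) \<le> L/8"
  proof -
    have "a\<^sup>2*(y\<^sup>2 - ys\<^sup>2) \<le> a\<^sup>2 * y\<^sup>2" by (simp add: mult_left_mono)
    also have "\<dots> \<le> (1/2) * \<alpha>2\<^sup>2" using a y2 by (intro mult_mono) auto
    also have "\<dots> \<le> L/8" using L by simp
    finally show ?thesis .
  qed
  have d0: "0 \<le> ys - y" using ys y al by linarith
  have d2: "ys - y \<le> 2*\<alpha>2" using ys y by linarith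
  have t1: "2*(a*X)*(ys - y) \<le> L/4"
  proof (cases "X \<le> 0")
    case True
    hence "a*X \<le> 0" using a by (simp add: mult_nonneg_nonpos)
    hence "(a*X)*(ys - y) \<le> 0" using d0 by (rule mult_nonpos_nonneg)
    hence "2*(a*X)*(ys - y) \<le> 0" by (simp only: mult.assoc)
    thus ?thesis using L by linarith
  next
    case False
    have "a*X \<le> X" using a False by (simp add: mult_le_cancel_right1)
    hence "2*(a*X)*(ys - y) \<le> 2*X*(2*\<alpha>2)" using d0 d2 False a
      by (intro mult_mono) auto
    also have "\<dots> = 4*\<alpha>2*X" by simp
    also have "\<dots> \<le> 4*\<alpha>2*(L/(16*\<alpha>2))" using L al by (intro mult_left_mono) auto
    also have "\<dots> = L/4" using al by simp
    finally show ?thesis .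
  qed
  have "2*b\<^sup>2*(L/2) = b\<^sup>2 * L" by simp
  moreover have "b\<^sup>2 * L \<ge> (1/2) * L" using b L by (intro mult_right_mono) auto
  ultimately show ?thesis using e t1 t2 L(3) by linarith
qed

lemma low_sq:
  fixes a X y \<alpha>2 :: real
  assumes "0 < a" "a \<le> 1" "0 \<le> y" "y \<le> \<alpha>2"
  shows "(X - a*y)\<^sup>2 \<le> (\<bar>X\<bar> + \<alpha>2)\<^sup>2"
proof -
  have "a*y \<le> 1*y" using assms by (intro mult_right_mono) auto
  moreover have ay: "0 \<le> a*y" using assms by simp
  moreover have "\<bar>X - a*y\<bar> \<le> \<bar>X\<bar> + \<bar>a*y\<bar>" by (rule abs_triangle_ineq4)
  ultimately have "\<bar>X - a*y\<bar> \<le> \<bar>\<bar>X\<bar> + \<alpha>2\<bar>" using assms by auto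
  thus ?thesis by (simp add: abs_le_square_iff)
qed

lemma sqrt_exp: assumes "w > 0" shows "sqrt w = exp (ln w / 2)"
proof -
  have "exp (ln w / 2) * exp (ln w / 2) = w" using assms by (simp add: exp_add[symmetric])
  hence "sqrt w = sqrt (exp (ln w / 2) * exp (ln w / 2))" by simp
  also have "\<dots> = exp (ln w / 2)" by simp
  finally show ?thesis .
qed

theorem lemma3p2:
  fixes p1 pm1 :: "real \<Rightarrow> real" and \<alpha>1 \<alpha>2 \<beta> T w t :: real and x :: "real \<Rightarrow> real"
  assumes "0 < \<alpha>1" and "\<alpha>1 < \<alpha>2" and "1 \<le> \<beta>" and "0 < T"
    and "is_density p1" and "is_density pm1"
    and "\<forall>y. y \<notin> {\<alpha>1..\<alpha>2} \<longrightarrow> p1 y = 0"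
    and "\<forall>y. y \<notin> {-\<alpha>2..-\<alpha>1} \<longrightarrow> pm1 y = 0"
    and "\<forall>x1 \<in> {-\<alpha>2<..<-\<alpha>1}. \<forall>x2 \<in> {\<alpha>1<..<\<alpha>2}.
           1/\<beta> \<le> pm1 x1 / p1 x2 \<and> pm1 x1 / p1 x2 \<le> \<beta>"
    and "1 \<le> w"
    and "\<alpha>2\<^sup>2 \<le> ln w / 4" and "\<alpha>1 * sqrt w \<ge> ln w"
    and ode: "\<forall>s \<in> {0..<T}.
           (x has_real_derivative guided_field p1 pm1 T w s (x s)) (at s within {0..<T})"
    and "t \<in> {0..<T}" and "(sched_a T t)\<^sup>2 \<le> 1/2"
    and "x t \<le> min (ln w / (16 * \<alpha>2)) (\<alpha>1 * sqrt w / (2 * \<beta>))"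
  shows "guided_field p1 pm1 T w t (x t)
           \<ge> sched_a T t * \<alpha>1 * sqrt w / (2 * \<beta> * (sched_b T t)\<^sup>2)"
proof -
  note al1 = assms(1) and al2 = assms(2) and be = assms(3)
  note dp1 = assms(5) and dpm1 = assms(6) and sp1 = assms(7) and spm1 = assms(8)
  note w1 = assms(10) and hal2 = assms(11)
  define a where "a = sched_a T t"
  define b where "b = sched_b T t"
  define X where "X = x t"
  have a0: "0 < a" by (simp add: a_def sched_a_def)
  have "t < T" using assms(14) by simp
  hence a1: "a \<le> 1" by (simp add: a_def sched_a_def)
  have a2: "a\<^sup>2 \<le> 1/2" using assms(15) by (simp add: a_def)
  have b2e: "b\<^sup>2 = 1 - a\<^sup>2" using a2 by (simp add: b_def sched_b_def a_def[symmetric])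
  have b2h: "b\<^sup>2 \<ge> 1/2" using a2 b2e by simp
  have bpos: "b > 0" using a2 by (simp add: b_def sched_b_def a_def[symmetric])
  have b2pos: "b\<^sup>2 > 0" using bpos by simp
  have "0 < \<alpha>2\<^sup>2" using al1 al2 by simp
  hence lnw: "ln w > 0" using hal2 by linarith
  hence wpos: "w > 0" using w1 by simp
  have sw1: "sqrt w \<ge> 1" using w1 by simp
  have Xb1: "X \<le> ln w / (16 * \<alpha>2)" and Xb2: "X \<le> \<alpha>1 * sqrt w / (2 * \<beta>)"
    using assms(16) by (simp_all add: X_def)
  have p1i: "integrable lborel p1" using dp1 unfolding is_density_def by simp
  have pm1i: "integrable lborel pm1" using dpm1 unfolding is_density_def by simp
  have c: "cK b > 0" using cK_pos[OF bpos] .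
  define K where "K = (\<lambda>y. cK b * G b (X - a*y))"
  define K1 where "K1 = (\<lambda>y. cK b * G1 b (X - a*y))"
  define D1 where "D1 = (LINT y|lborel. p1 y * K y)"
  define Dm where "Dm = (LINT y|lborel. pm1 y * K y)"
  define E1 where "E1 = (LINT y|lborel. p1 y * K1 y)"
  define Em where "Em = (LINT y|lborel. pm1 y * K1 y)"
  have Kpos: "\<And>y. K y > 0" unfolding K_def using c G_pos by simp
  have Kb: "\<And>y. \<bar>K y\<bar> \<le> cK b"
  proof -
    fix y
    have "\<bar>K y\<bar> = cK b * G b (X - a*y)" unfolding K_def using c G_pos[of b "X - a*y"] by (simp add: abs_mult)
    also have "\<dots> \<le> cK b * 1" using c G_le1[of b] by (intro mult_left_mono) auto
    finally show "\<bar>K y\<bar> \<le> cK b" by simp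
  qed
  have K1b: "\<And>y. \<bar>K1 y\<bar> \<le> cK b / b"
  proof -
    fix y
    have "\<bar>K1 y\<bar> = cK b * \<bar>G1 b (X - a*y)\<bar>" unfolding K1_def using c by (simp add: abs_mult)
    also have "\<dots> \<le> cK b * (1/b)" using c G1_bound[OF bpos] by (intro mult_left_mono) auto
    finally show "\<bar>K1 y\<bar> \<le> cK b / b" by simp
  qed
  have Km: "K \<in> borel_measurable lborel" unfolding K_def using G_meas by simp
  have K1m: "K1 \<in> borel_measurable lborel" unfolding K1_def using G1_meas by simp
  have K1e: "\<And>y. K1 y = (a*y - X)/b\<^sup>2 * K y"
    unfolding K1_def K_def G1_def using bpos by (simp add: field_simps)
  have cond: "\<And>q. cond_density_t q T t = noised_density q a b"
    by (rule ext) (simp add: cond_density_t_def a_def b_def)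
  have marg: "marg_density_t p1 pm1 T t = (\<lambda>u. 1/2 * noised_density p1 a b u + 1/2 * noised_density pm1 a b u)"
    by (rule ext) (simp add: marg_density_t_def cond)
  have nd: "\<And>q. noised_density q a b X = (LINT y|lborel. q y * K y)"
    by (simp add: noised_density_def ND K_def)
  have d1: "(noised_density p1 a b has_real_derivative E1) (at X)"
    using noised_deriv[OF bpos p1i, of a X] unfolding E1_def K1_def .
  have dm: "(noised_density pm1 a b has_real_derivative Em) (at X)"
    using noised_deriv[OF bpos pm1i, of a X] unfolding Em_def K1_def .
  have E1b: "E1 \<ge> (a*\<alpha>1 - X)/b\<^sup>2 * D1"
  proof -
    have "(a*\<alpha>1 - X)/b\<^sup>2 * D1 = (LINT y|lborel. (a*\<alpha>1 - X)/b\<^sup>2 * (p1 y * K y))"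
      unfolding D1_def by (rule integral_mult_right_zero[symmetric])
    also have "\<dots> = (LINT y|lborel. p1 y * ((a*\<alpha>1 - X)/b\<^sup>2 * K y))"
      by (intro arg_cong[where f="integral\<^sup>L lborel"] ext) (simp add: algebra_simps)
    also have "\<dots> \<le> E1" unfolding E1_def
    proof (rule int_mono_supp[OF dp1, where B="\<bar>(a*\<alpha>1 - X)/b\<^sup>2\<bar> * cK b + cK b / b"])
      show "(\<lambda>y. (a*\<alpha>1 - X)/b\<^sup>2 * K y) \<in> borel_measurable lborel" using Km by simp
      show "K1 \<in> borel_measurable lborel" by (rule K1m)
      show "\<bar>(a*\<alpha>1 - X)/b\<^sup>2 * K y\<bar> \<le> \<bar>(a*\<alpha>1 - X)/b\<^sup>2\<bar> * cK b + cK b / b" for y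
      proof -
        have "\<bar>(a*\<alpha>1 - X)/b\<^sup>2 * K y\<bar> \<le> \<bar>(a*\<alpha>1 - X)/b\<^sup>2\<bar> * cK b"
          unfolding abs_mult using Kb[of y] by (intro mult_left_mono) auto
        moreover have "0 \<le> cK b / b" using c bpos by simp
        ultimately show ?thesis by linarith
      qed
      show "\<bar>K1 y\<bar> \<le> \<bar>(a*\<alpha>1 - X)/b\<^sup>2\<bar> * cK b + cK b / b" for y
        using K1b[of y] c by (smt (verit) abs_ge_zero mult_nonneg_nonneg)
      show "(a*\<alpha>1 - X)/b\<^sup>2 * K y \<le> K1 y" if "p1 y \<noteq> 0" for y
      proof -
        have "\<alpha>1 \<le> y" using sp1 that by auto
        hence "a*\<alpha>1 - X \<le> a*y - X" using a0 by simp
        hence "(a*\<alpha>1 - X)/b\<^sup>2 \<le> (a*y - X)/b\<^sup>2" using b2pos by (intro divide_right_mono) auto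
        hence "(a*\<alpha>1 - X)/b\<^sup>2 * K y \<le> (a*y - X)/b\<^sup>2 * K y" using Kpos[of y] by (intro mult_right_mono) auto
        thus ?thesis unfolding K1e .
      qed
    qed
    finally show ?thesis .
  qed
  have Emb: "Em \<le> (-a*\<alpha>1 - X)/b\<^sup>2 * Dm"
  proof -
    have "(-a*\<alpha>1 - X)/b\<^sup>2 * Dm = (LINT y|lborel. (-a*\<alpha>1 - X)/b\<^sup>2 * (pm1 y * K y))"
      unfolding Dm_def by (rule integral_mult_right_zero[symmetric])
    also have "\<dots> = (LINT y|lborel. pm1 y * ((-a*\<alpha>1 - X)/b\<^sup>2 * K y))"
      by (intro arg_cong[where f="integral\<^sup>L lborel"] ext) (simp add: algebra_simps)
    also have "Em \<le> \<dots>" unfolding Em_def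
    proof (rule int_mono_supp[OF dpm1, where B="\<bar>(-a*\<alpha>1 - X)/b\<^sup>2\<bar> * cK b + cK b / b"])
      show "(\<lambda>y. (-a*\<alpha>1 - X)/b\<^sup>2 * K y) \<in> borel_measurable lborel" using Km by simp
      show "K1 \<in> borel_measurable lborel" by (rule K1m)
      show "\<bar>(-a*\<alpha>1 - X)/b\<^sup>2 * K y\<bar> \<le> \<bar>(-a*\<alpha>1 - X)/b\<^sup>2\<bar> * cK b + cK b / b" for y
      proof -
        have "\<bar>(-a*\<alpha>1 - X)/b\<^sup>2 * K y\<bar> \<le> \<bar>(-a*\<alpha>1 - X)/b\<^sup>2\<bar> * cK b"
          unfolding abs_mult using Kb[of y] by (intro mult_left_mono) auto
        moreover have "0 \<le> cK b / b" using c bpos by simp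
        ultimately show ?thesis by linarith
      qed
      show "\<bar>K1 y\<bar> \<le> \<bar>(-a*\<alpha>1 - X)/b\<^sup>2\<bar> * cK b + cK b / b" for y
        using K1b[of y] c by (smt (verit) abs_ge_zero mult_nonneg_nonneg)
      show "K1 y \<le> (-a*\<alpha>1 - X)/b\<^sup>2 * K y" if "pm1 y \<noteq> 0" for y
      proof -
        have "y \<le> -\<alpha>1" using spm1 that by auto
        hence "a*y \<le> a*(-\<alpha>1)" using a0 by (intro mult_left_mono) auto
        hence "a*y - X \<le> -a*\<alpha>1 - X" by simp
        hence "(a*y - X)/b\<^sup>2 \<le> (-a*\<alpha>1 - X)/b\<^sup>2" using b2pos by (intro divide_right_mono) auto
        hence "(a*y - X)/b\<^sup>2 * K y \<le> (-a*\<alpha>1 - X)/b\<^sup>2 * K y" using Kpos[of y] by (intro mult_right_mono) auto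
        thus ?thesis unfolding K1e .
      qed
    qed
    finally show ?thesis .
  qed
  define ys where "ys = max \<alpha>1 (min \<alpha>2 (X/a))"
  have ys1: "\<alpha>1 \<le> ys" and ys2: "ys \<le> \<alpha>2" unfolding ys_def using clamp_in[OF al2] by auto
  define Ks where "Ks = K ys"
  have Kspos: "Ks > 0" unfolding Ks_def by (rule Kpos)
  have D1le: "D1 \<le> Ks"
  proof -
    have "D1 \<le> (LINT y|lborel. p1 y * Ks)" unfolding D1_def
    proof (rule int_mono_supp[OF dp1 Km, where B="cK b"])
      show "(\<lambda>y. Ks) \<in> borel_measurable lborel" by simp
      show "\<bar>K y\<bar> \<le> cK b" for y by (rule Kb)
      show "\<bar>Ks\<bar> \<le> cK b" for y :: real unfolding Ks_def by (rule Kb)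
      show "K y \<le> Ks" if "p1 y \<noteq> 0" for y
      proof -
        have "\<alpha>1 \<le> y" "y \<le> \<alpha>2" using sp1 that by auto
        hence "(X - a*ys)\<^sup>2 \<le> (X - a*y)\<^sup>2" unfolding ys_def by (intro clamp_sq a0)
        hence "G b (X - a*y) \<le> G b (X - a*ys)" by (rule G_mono)
        thus ?thesis unfolding K_def Ks_def using c by simp
      qed
    qed
    thus ?thesis using int_const[OF dp1, of Ks] by linarith
  qed
  have sqw: "sqrt w = exp (ln w / 2)" by (rule sqrt_exp[OF wpos])
  have swpos: "sqrt w > 0" using wpos by simp
  have Dmge: "Ks / sqrt w \<le> Dm"
  proof -
    have "(LINT y|lborel. pm1 y * (Ks / sqrt w)) \<le> Dm" unfolding Dm_def
    proof (rule int_mono_supp[OF dpm1 _ Km, where B="cK b"])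
      show "(\<lambda>y. Ks / sqrt w) \<in> borel_measurable lborel" by simp
      show "\<bar>K y\<bar> \<le> cK b" for y by (rule Kb)
      show "\<bar>Ks / sqrt w\<bar> \<le> cK b" for y :: real
      proof -
        have "Ks / sqrt w \<le> Ks" using Kspos sw1 by (simp add: divide_le_eq)
        thus ?thesis using Kb[of ys] Kspos swpos unfolding Ks_def by simp
      qed
      show "Ks / sqrt w \<le> K y" if "pm1 y \<noteq> 0" for y
      proof -
        have "-\<alpha>2 \<le> y" "y \<le> -\<alpha>1" using spm1 that by auto
        hence "(X - a*y)\<^sup>2 - (X - a*ys)\<^sup>2 \<le> 2*b\<^sup>2*(ln w/2)"
          using ratio_diff[OF a0 a1 a2 b2h al1 al2 ys1 ys2 _ _ hal2 Xb1] lnw by simp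
        hence "G b (X - a*ys) \<le> exp (ln w / 2) * G b (X - a*y)" by (rule G_ratio[OF bpos])
        hence "Ks \<le> sqrt w * K y" unfolding Ks_def K_def sqw using c
          by (simp add: mult.left_commute mult_left_mono)
        thus ?thesis using swpos by (simp add: divide_le_eq mult.commute)
      qed
    qed
    thus ?thesis using int_const[OF dpm1, of "Ks / sqrt w"] by linarith
  qed
  have Dmpos: "Dm > 0" using Dmge Kspos swpos by (smt (verit) divide_pos_pos)
  have R: "D1 \<le> sqrt w * Dm"
  proof -
    have "sqrt w * (Ks / sqrt w) \<le> sqrt w * Dm" using Dmge swpos by (intro mult_left_mono) auto
    thus ?thesis using D1le swpos by simp
  qed
  define Kl where "Kl = cK b * G b (\<bar>X\<bar> + \<alpha>2)"
  have Klpos: "Kl > 0" unfolding Kl_def using c G_pos by simp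
  have D1pos: "D1 > 0"
  proof -
    have "(LINT y|lborel. p1 y * Kl) \<le> D1" unfolding D1_def
    proof (rule int_mono_supp[OF dp1 _ Km, where B="cK b"])
      show "(\<lambda>y. Kl) \<in> borel_measurable lborel" by simp
      show "\<bar>K y\<bar> \<le> cK b" for y by (rule Kb)
      show "\<bar>Kl\<bar> \<le> cK b" for y :: real
        unfolding Kl_def using c G_pos[of b "\<bar>X\<bar> + \<alpha>2"] G_le1[of b "\<bar>X\<bar> + \<alpha>2"]
        by (simp add: abs_mult mult_left_le)
      show "Kl \<le> K y" if "p1 y \<noteq> 0" for y
      proof -
        have "\<alpha>1 \<le> y" "y \<le> \<alpha>2" using sp1 that by auto
        hence "(X - a*y)\<^sup>2 \<le> (\<bar>X\<bar> + \<alpha>2)\<^sup>2" using al1 by (intro low_sq a0 a1) auto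
        hence "G b (\<bar>X\<bar> + \<alpha>2) \<le> G b (X - a*y)" by (rule G_mono)
        thus ?thesis unfolding K_def Kl_def using c by simp
      qed
    qed
    thus ?thesis using int_const[OF dp1, of Kl] Klpos by linarith
  qed
  have v1: "noised_density p1 a b X = D1" unfolding nd D1_def ..
  have vm: "noised_density pm1 a b X = Dm" unfolding nd Dm_def ..
  have sc1: "score (cond_density_t p1 T t) X = E1 / D1"
  proof -
    have "((\<lambda>u. ln (noised_density p1 a b u)) has_real_derivative (1 / noised_density p1 a b X) * E1) (at X)"
      by (rule DERIV_chain2[OF DERIV_ln_divide d1]) (simp add: v1 D1pos)
    thus ?thesis unfolding score_def cond using DERIV_imp_deriv v1 by fastforce
  qed
  have scm: "score (marg_density_t p1 pm1 T t) X = (1/2*E1 + 1/2*Em) / (1/2*D1 + 1/2*Dm)"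
  proof -
    have dd: "((\<lambda>u. 1/2 * noised_density p1 a b u + 1/2 * noised_density pm1 a b u) has_real_derivative (1/2*E1 + 1/2*Em)) (at X)"
      by (intro DERIV_add DERIV_cmult d1 dm)
    have pos: "0 < 1/2 * noised_density p1 a b X + 1/2 * noised_density pm1 a b X"
      using D1pos Dmpos v1 vm by simp
    have "((\<lambda>u. ln (1/2 * noised_density p1 a b u + 1/2 * noised_density pm1 a b u)) has_real_derivative
          (1 / (1/2 * noised_density p1 a b X + 1/2 * noised_density pm1 a b X)) * (1/2*E1 + 1/2*Em)) (at X)"
      by (rule DERIV_chain2[OF DERIV_ln_divide[OF pos] dd])
    thus ?thesis unfolding score_def marg using DERIV_imp_deriv v1 vm by fastforce
  qed
  have gf: "guided_field p1 pm1 T w t X = X + (w+1) * (E1/D1) - w * ((1/2*E1 + 1/2*Em) / (1/2*D1 + 1/2*Dm))"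
    unfolding guided_field_def sc1 scm ..
  have wsq: "w = (sqrt w)\<^sup>2" using wpos by simp
  have fa: "X + ((sqrt w)\<^sup>2+1) * (E1/D1) - (sqrt w)\<^sup>2 * ((1/2*E1 + 1/2*Em)/(1/2*D1 + 1/2*Dm)) \<ge> a*\<alpha>1* sqrt w/(2*\<beta>*b\<^sup>2)"
    by (rule final_alg[OF D1pos Dmpos R sw1 b2pos b2e a0 a1 al1 be E1b Emb Xb2])
  show ?thesis using fa unfolding gf[unfolded X_def] a_def b_def X_def wsq[symmetric] by simp
qed

end
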